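(* Let $(J,\mu)$ be a standard Borel space with a Borel measure $\mu$, and let $\mathcal{I}$ be a family of Borel subsets of $J$ satisfying (I1) if $I_1\subseteq I_2\subseteq\cdots$ with $I_n\in\mathcal{I}$ for all $n\in\mathbb{Z}_+$, then $\bigcup_n I_n\in\mathcal{I}$. Then $\mathcal{I}$ satisfies (I2) for all $I_1,I_2\in\mathcal{I}$ with $\mu(I_1)<\mu(I_2)$ there exists $I_3\in\mathcal{I}$ with $I_1\subseteq I_3\subseteq I_1\cup I_2$ and $\mu(I_3)>\mu(I_1)$ if and only if it satisfies (I2') for all $I_1,I_2\in\mathcal{I}$ there exists $I_3\in\mathcal{I}$ with $I_1\subseteq I_3\subseteq I_1\cup I_2$ and $\mu(I_3)\ge\mu(I_2)$. *)

theory Defs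
  imports "HOL-Analysis.Analysis"
begin

definition axiom_I1 :: "'a set set \<Rightarrow> bool" where
  "axiom_I1 \<I> \<longleftrightarrow>
     (\<forall>I :: nat \<Rightarrow> 'a set. incseq I \<longrightarrow> (\<forall>n. I n \<in> \<I>) \<longrightarrow> (\<Union>n. I n) \<in> \<I>)"

definition axiom_I2 :: "'a measure \<Rightarrow> 'a set set \<Rightarrow> bool" where
  "axiom_I2 M \<I> \<longleftrightarrow>
     (\<forall>I1\<in>\<I>. \<forall>I2\<in>\<I>. emeasure M I1 < emeasure M I2 \<longrightarrow>
        (\<exists>I3\<in>\<I>. I1 \<subseteq> I3 \<and> I3 \<subseteq> I1 \<union> I2 \<and> emeasure M I3 > emeasure M I1))"

definition axiom_I2' :: "'a measure \<Rightarrow> 'a set set \<Rightarrow> bool" where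
  "axiom_I2' M \<I> \<longleftrightarrow>
     (\<forall>I1\<in>\<I>. \<forall>I2\<in>\<I>.
        (\<exists>I3\<in>\<I>. I1 \<subseteq> I3 \<and> I3 \<subseteq> I1 \<union> I2 \<and> emeasure M I3 \<ge> emeasure M I2))"

end

theory Submission
  imports Defs
begin

definition gmap :: "ennreal \<Rightarrow> real" where
  "gmap x = (if x = top then 1 else enn2real x / (1 + enn2real x))"

lemma frac_aux: "0 \<le> a \<Longrightarrow> a < (b::real) \<Longrightarrow> a/(1+a) < b/(1+b)"
proof -
  assume "0 \<le> a" "a < b"
  then have "a*(1+b) < b*(1+a)" by (simp add: algebra_simps)
  moreover have "1+a > 0" "1+b>0" using \<open>0 \<le> a\<close> \<open>a < b\<close> by auto
  ultimately show ?thesis by (simp add: divide_less_eq less_divide_eq mult.commute)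
qed

lemma gmap_le1: "gmap x \<le> 1"
proof -
  have "0 \<le> enn2real x" by simp
  then have "1 + enn2real x > 0" by linarith
  then have "enn2real x / (1 + enn2real x) \<le> 1" by (simp add: divide_le_eq_1_pos)
  then show ?thesis unfolding gmap_def by simp
qed

lemma gmap_strict: assumes "x < y" shows "gmap x < gmap y"
proof (cases "y = top")
  case True
  then have xt: "x \<noteq> top" using assms by auto
  have "0 \<le> enn2real x" by simp
  then have "1 + enn2real x > 0" by linarith
  then have "enn2real x / (1 + enn2real x) < 1" by (simp add: divide_less_eq_1_pos)
  then show ?thesis using True xt unfolding gmap_def by simp
next
  case False
  then have xt: "x \<noteq> top" using assms by auto
  have "enn2real x < enn2real y" using assms False xt
    by (simp add: enn2real_less_iff less_top)
  then have "enn2real x / (1 + enn2real x) < enn2real y / (1 + enn2real y)"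
    by (intro frac_aux) auto
  then show ?thesis using False xt unfolding gmap_def by simp
qed

lemma gmap_mono: assumes "x \<le> y" shows "gmap x \<le> gmap y"
proof (cases "x = y")
  case False
  then show ?thesis using gmap_strict[of x y] assms by (meson le_neq_trans less_imp_le)
qed simp

lemma eps_le: fixes a b :: real assumes "\<And>n::nat. a \<le> b + 1 / (real n + 1)" shows "a \<le> b"
proof (rule ccontr)
  assume "\<not> a \<le> b"
  then have "0 < a - b" by simp
  then obtain n :: nat where n: "inverse (real (Suc n)) < a - b"
    using reals_Archimedean by blast
  have "1 / (real n + 1) = inverse (real (Suc n))" by (simp add: divide_inverse add.commute)
  then have "a \<le> b + inverse (real (Suc n))" using assms[of n] by simp
  then show False using n by linarith
qed

theorem lemma4p10:
  fixes M :: "'a::polish_space measure" and \<I> :: "'a set set"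
  assumes "sets M = sets borel"
    and "\<I> \<subseteq> sets M"
    and "axiom_I1 \<I>"
  shows "axiom_I2 M \<I> \<longleftrightarrow> axiom_I2' M \<I>"
proof
  assume "axiom_I2' M \<I>"
  then show "axiom_I2 M \<I>" unfolding axiom_I2_def axiom_I2'_def
    by (meson order_less_le_trans)
next
  assume A2: "axiom_I2 M \<I>"
  show "axiom_I2' M \<I>" unfolding axiom_I2'_def
  proof (intro ballI)
    fix I1 I2 assume h1: "I1 \<in> \<I>" and h2: "I2 \<in> \<I>"
    define F where "F = {K \<in> \<I>. I1 \<subseteq> K \<and> K \<subseteq> I1 \<union> I2}"
    show "\<exists>I3\<in>\<I>. I1 \<subseteq> I3 \<and> I3 \<subseteq> I1 \<union> I2 \<and> emeasure M I2 \<le> emeasure M I3"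
    proof (rule ccontr)
      assume "\<not> ?thesis"
      then have lt: "\<And>K. K \<in> F \<Longrightarrow> emeasure M K < emeasure M I2"
        unfolding F_def by (auto simp: not_le)
      define t where "t J = Sup ((\<lambda>K. gmap (emeasure M K)) ` {K \<in> F. J \<subseteq> K})" for J
      have bdd: "bdd_above ((\<lambda>K. gmap (emeasure M K)) ` {K \<in> F. J \<subseteq> K})" for J
        using gmap_le1 by (intro bdd_aboveI) auto
      have ex: "\<exists>K. K \<in> F \<and> J \<subseteq> K \<and> gmap (emeasure M K) > t J - 1 / (real n + 1)"
        if "J \<in> F" for J n
      proof -
        have ne: "(\<lambda>K. gmap (emeasure M K)) ` {K \<in> F. J \<subseteq> K} \<noteq> {}" using that by auto
        have "t J - 1 / (real n + 1) < t J" by simp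
        then show ?thesis unfolding t_def using less_cSup_iff[OF ne bdd[of J]] by auto
      qed
      define step where "step n J = (SOME K. K \<in> F \<and> J \<subseteq> K \<and> gmap (emeasure M K) > t J - 1 / (real n + 1))" for n J
      define Js where "Js = rec_nat I1 step"
      have J0: "Js 0 = I1" unfolding Js_def by simp
      have JS: "Js (Suc n) = step n (Js n)" for n unfolding Js_def by simp
      have I1F: "I1 \<in> F" unfolding F_def using h1 by auto
      have JF: "Js n \<in> F \<and> (Js n \<subseteq> Js (Suc n) \<and> gmap (emeasure M (Js (Suc n))) > t (Js n) - 1 / (real n + 1))" for n
      proof (induction n)
        case 0
        show ?case unfolding JS J0 step_def using someI_ex[OF ex[OF I1F, of 0]] I1F by simp
      next
        case (Suc n)
        then have "Js (Suc n) \<in> F" unfolding JS step_def using someI_ex[OF ex[of "Js n" n]] by simp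
        then show ?case unfolding JS[of "Suc n"] step_def using someI_ex[OF ex[of "Js (Suc n)" "Suc n"]] by simp
      qed
      have inc: "incseq Js" using JF by (intro incseq_SucI) auto
      define U where "U = (\<Union>n. Js n)"
      have JI: "Js n \<in> \<I>" for n using JF unfolding F_def by blast
      have UI: "U \<in> \<I>" unfolding U_def
        using assms(3)[unfolded axiom_I1_def, rule_format, OF inc JI] .
      have "I1 \<subseteq> U" unfolding U_def using J0 by blast
      moreover have "U \<subseteq> I1 \<union> I2" unfolding U_def using JF unfolding F_def by blast
      ultimately have UF: "U \<in> F" using UI unfolding F_def by blast
      obtain K' where K': "K' \<in> \<I>" "U \<subseteq> K'" "K' \<subseteq> U \<union> I2" "emeasure M K' > emeasure M U"
        using A2[unfolded axiom_I2_def, rule_format, OF UI h2 lt[OF UF]] by blast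
      have K'F: "K' \<in> F" using K' \<open>U \<subseteq> I1 \<union> I2\<close> \<open>I1 \<subseteq> U\<close> unfolding F_def by blast
      have UM: "U \<in> sets M" using UI assms(2) by auto
      have "gmap (emeasure M K') \<le> gmap (emeasure M U) + 1 / (real n + 1)" for n
      proof -
        have "gmap (emeasure M K') \<le> t (Js n)" unfolding t_def
          using K'F K' by (intro cSup_upper[OF _ bdd]) (auto simp: U_def)
        also have "\<dots> < gmap (emeasure M (Js (Suc n))) + 1 / (real n + 1)" using JF[of n] by simp
        also have "gmap (emeasure M (Js (Suc n))) \<le> gmap (emeasure M U)"
          by (intro gmap_mono emeasure_mono UM) (auto simp: U_def)
        finally show ?thesis by simp
      qed
      then have "gmap (emeasure M K') \<le> gmap (emeasure M U)" by (rule eps_le)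
      with gmap_strict[OF K'(4)] show False by simp
    qed
  qed
qed

end
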